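(* Let $\mathbf S$ and $\mathbf T$ be label cover instances such that $\mathbf S\to\pi_{\mathbf P}(\mathbf T)$. Then $\pi_{\mathbf B}(\mathbf S)\to\pi_{\mathbf B}(\mathbf T)$ for every structure $\mathbf B$.
   Context: Structures. A (multisorted relational) signature consists of types and relation symbols, each symbol $R$ having an arity $\mathrm{ar}_R$, a tuple of types. A structure $\mathbf A$ consists of a set $A_t$ per type and relations $R^{\mathbf A}\subseteq A_{\mathrm{ar}_R(1)}\times\dots\times A_{\mathrm{ar}_R(k)}$. A homomorphism is a type-preserving family of maps preserving all relations; write $\mathbf A\to\mathbf B$. For a finite set $X$, $\mathbf B^X$ has domains $B_t^X$ (maps $X\to B_t$) and $(b_1,\dots,b_m)\in R^{\mathbf B^X}$ iff $(b_1(i),\dots,b_m(i))\in R^{\mathbf B}$ for all $i\in X$. Label cover. The label cover signature has a type $X$ for each finite set $X$ and a binary symbol $E_\pi$ of arity $(X,Y)$ for each map $\pi\colon X\to Y$. The label cover template $\mathbf P$ has domain $P_X=X$ for each type $X$ and $E_\pi^{\mathbf P}=\{(x,\pi(x))\mid x\in X\}$. A label cover instance is a structure in this signature with finitely many nonempty domains, all finite. Universal gadget. For a structure $\mathbf B$ (in any signature, possibly the label cover signature itself) and a label cover instance $\mathbf S$, $\pi_{\mathbf B}(\mathbf S)$ is obtained by taking a copy of $\mathbf B^X$ for each element $s$ of type $X$ (elements $(s;b)$, $b\colon X\to B_t$), identifying $(s;b\circ\sigma)$ with $(t;b)$ for each $(s,t)\in E_\sigma^{\mathbf S}$ with $\sigma\colon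 X\to Y$ and each $b\colon Y\to B_u$, and taking the quotient by the generated equivalence relation, with relations the images of those of the copies. In particular $\pi_{\mathbf P}(\mathbf T)$ is a structure in the label cover signature. *)

theory Defs
  imports "HOL-Library.FuncSet"
begin

record ('ty, 'r) msig =
  Tys :: "'ty set"
  Syms :: "'r set"
  arity :: "'r \<Rightarrow> 'ty list"

record ('ty, 'r, 'e) mstruct =
  carr :: "'ty \<Rightarrow> 'e set"
  rels :: "'r \<Rightarrow> 'e list set"

definition is_structure :: "('ty, 'r) msig \<Rightarrow> ('ty, 'r, 'e) mstruct \<Rightarrow> bool" where
  "is_structure sg A \<longleftrightarrow>
     (\<forall>R\<in>Syms sg. set (arity sg R) \<subseteq> Tys sg \<and>
        (\<forall>xs\<in>rels A R. length xs = length (arity sg R) \<and>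
           (\<forall>i<length xs. xs ! i \<in> carr A (arity sg R ! i))))"

definition is_hom :: "('ty, 'r) msig \<Rightarrow> ('ty, 'r, 'e) mstruct \<Rightarrow> ('ty, 'r, 'f) mstruct
                      \<Rightarrow> ('ty \<Rightarrow> 'e \<Rightarrow> 'f) \<Rightarrow> bool" where
  "is_hom sg A B h \<longleftrightarrow>
     (\<forall>t\<in>Tys sg. \<forall>a\<in>carr A t. h t a \<in> carr B t) \<and>
     (\<forall>R\<in>Syms sg. \<forall>xs\<in>rels A R.
        map (\<lambda>i. h (arity sg R ! i) (xs ! i)) [0..<length xs] \<in> rels B R)"

definition hom_exists :: "('ty, 'r) msig \<Rightarrow> ('ty, 'r, 'e) mstruct \<Rightarrow> ('ty, 'r, 'f) mstruct \<Rightarrow> bool" where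
  "hom_exists sg A B \<longleftrightarrow> (\<exists>h. is_hom sg A B h)"

text \<open>Types of the label cover signature: finite sets (taken as finite sets of
  naturals); symbols: triples (X, Y, pi) with pi an (extensional) map X -> Y.\<close>
type_synonym lc_sym = "nat set \<times> nat set \<times> (nat \<Rightarrow> nat)"

definition LC :: "(nat set, lc_sym) msig" where
  "LC = \<lparr>Tys = {X. finite X},
         Syms = {(X, Y, p). finite X \<and> finite Y \<and> p \<in> X \<rightarrow>\<^sub>E Y},
         arity = (\<lambda>(X, Y, p). [X, Y])\<rparr>"

definition LCP :: "(nat set, lc_sym, nat) mstruct" where
  "LCP = \<lparr>carr = (\<lambda>X. X), rels = (\<lambda>(X, Y, p). {[x, p x] | x. x \<in> X})\<rparr>"

definition lc_instance :: "(nat set, lc_sym, 'a) mstruct \<Rightarrow> bool" where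
  "lc_instance S \<longleftrightarrow> is_structure LC S \<and>
     finite {X \<in> Tys LC. carr S X \<noteq> {}} \<and> (\<forall>X\<in>Tys LC. finite (carr S X))"

definition power :: "('ty, 'r) msig \<Rightarrow> ('ty, 'r, 'e) mstruct \<Rightarrow> nat set
                     \<Rightarrow> ('ty, 'r, nat \<Rightarrow> 'e) mstruct" where
  "power sg B X = \<lparr>carr = (\<lambda>t. X \<rightarrow>\<^sub>E carr B t),
     rels = (\<lambda>R. {bs. length bs = length (arity sg R) \<and>
                      (\<forall>i<length bs. bs ! i \<in> X \<rightarrow>\<^sub>E carr B (arity sg R ! i)) \<and>
                      (\<forall>x\<in>X. map (\<lambda>b. b x) bs \<in> rels B R)})\<rparr>"

text \<open>Disjoint union of the copies: element (s; b) with s of type X is the triple (X, s, b).\<close>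
definition gad_base :: "('ty, 'r, 'e) mstruct \<Rightarrow> (nat set, lc_sym, 'a) mstruct \<Rightarrow> 'ty
                        \<Rightarrow> (nat set \<times> 'a \<times> (nat \<Rightarrow> 'e)) set" where
  "gad_base B S u = {(X, s, b). finite X \<and> s \<in> carr S X \<and> b \<in> X \<rightarrow>\<^sub>E carr B u}"

text \<open>Generating identifications: (s; b o sigma) ~ (t; b) for (s,t) in E_sigma.\<close>
definition gad_gen :: "('ty, 'r, 'e) mstruct \<Rightarrow> (nat set, lc_sym, 'a) mstruct \<Rightarrow> 'ty
                       \<Rightarrow> ((nat set \<times> 'a \<times> (nat \<Rightarrow> 'e)) \<times> (nat set \<times> 'a \<times> (nat \<Rightarrow> 'e))) set" where
  "gad_gen B S u = {((X, s, restrict (b \<circ> p) X), (Y, t, b)) | X Y p s t b.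
       (X, Y, p) \<in> Syms LC \<and> [s, t] \<in> rels S (X, Y, p) \<and> b \<in> Y \<rightarrow>\<^sub>E carr B u}"

definition gad_eq :: "('ty, 'r, 'e) mstruct \<Rightarrow> (nat set, lc_sym, 'a) mstruct \<Rightarrow> 'ty
                       \<Rightarrow> ((nat set \<times> 'a \<times> (nat \<Rightarrow> 'e)) \<times> (nat set \<times> 'a \<times> (nat \<Rightarrow> 'e))) set" where
  "gad_eq B S u = (gad_gen B S u \<union> (gad_gen B S u)\<inverse> \<union> Id_on (gad_base B S u))\<^sup>+"

definition gadget :: "('ty, 'r) msig \<Rightarrow> ('ty, 'r, 'e) mstruct \<Rightarrow> (nat set, lc_sym, 'a) mstruct
                      \<Rightarrow> ('ty, 'r, (nat set \<times> 'a \<times> (nat \<Rightarrow> 'e)) set) mstruct" where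
  "gadget sg B S = \<lparr>carr = (\<lambda>u. gad_base B S u // gad_eq B S u),
     rels = (\<lambda>R. {map (\<lambda>i. gad_eq B S (arity sg R ! i) `` {(X, s, bs ! i)}) [0..<length bs]
                   | X s bs. finite X \<and> s \<in> carr S X \<and> bs \<in> rels (power sg B X) R})\<rparr>"

end

theory Submission
  imports Defs
begin

lemma cls_eq:
  assumes "(a,b) \<in> (r \<union> r\<inverse> \<union> Id_on A)\<^sup>+"
  shows "(r \<union> r\<inverse> \<union> Id_on A)\<^sup>+ `` {a} = (r \<union> r\<inverse> \<union> Id_on A)\<^sup>+ `` {b}"
proof -
  have s: "sym ((r \<union> r\<inverse> \<union> Id_on A)\<^sup>+)"
    by (rule sym_trancl) (auto simp: sym_def Id_on_def)
  have "(b,a) \<in> (r \<union> r\<inverse> \<union> Id_on A)\<^sup>+" using s assms by (meson symD)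
  then show ?thesis using assms by (auto intro: trancl_trans)
qed

lemma trancl_map_rel:
  assumes "(x,y) \<in> r\<^sup>+" and "\<And>x y. (x,y) \<in> r \<Longrightarrow> (f x, f y) \<in> s\<^sup>+"
  shows "(f x, f y) \<in> s\<^sup>+"
  using assms(1) by (induction rule: trancl_induct) (auto intro: assms(2) trancl_trans)

lemma trancl_resp:
  assumes "(x,y) \<in> r\<^sup>+" and "\<And>x y. (x,y) \<in> r \<Longrightarrow> f x = f y"
  shows "f x = f y"
  using assms(1) by (induction rule: trancl_induct) (auto dest: assms(2))

definition phi :: "(nat \<Rightarrow> 'e) \<Rightarrow> (nat set \<times> 'b \<times> (nat \<Rightarrow> nat)) \<Rightarrow> (nat set \<times> 'b \<times> (nat \<Rightarrow> 'e))" where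
  "phi b r = (fst r, fst (snd r), restrict (b \<circ> snd (snd r)) (fst r))"

lemma phi_step:
  assumes b: "b \<in> X \<rightarrow>\<^sub>E carr B u"
    and xy: "(x,y) \<in> gad_gen LCP T X \<union> (gad_gen LCP T X)\<inverse> \<union> Id_on (gad_base LCP T X)"
  shows "(phi b x, phi b y) \<in> (gad_gen B T u \<union> (gad_gen B T u)\<inverse> \<union> Id_on (gad_base B T u))\<^sup>+"
proof -
  have gen: "(phi b x, phi b y) \<in> gad_gen B T u" if "(x,y) \<in> gad_gen LCP T X" for x y
  proof -
    from that obtain Y Y' p t t' c where
      x: "x = (Y, t, restrict (c \<circ> p) Y)" and y: "y = (Y', t', c)"
      and sy: "(Y, Y', p) \<in> Syms LC" and tt: "[t, t'] \<in> rels T (Y, Y', p)"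
      and c: "c \<in> Y' \<rightarrow>\<^sub>E carr LCP X"
      unfolding gad_gen_def by blast
    have p: "p \<in> Y \<rightarrow>\<^sub>E Y'" using sy by (auto simp: LC_def)
    have c': "c \<in> Y' \<rightarrow>\<^sub>E X" using c by (simp add: LCP_def)
    have eq: "restrict (b \<circ> restrict (c \<circ> p) Y) Y = restrict (restrict (b \<circ> c) Y' \<circ> p) Y"
      using p by (auto simp: fun_eq_iff)
    have bc: "restrict (b \<circ> c) Y' \<in> Y' \<rightarrow>\<^sub>E carr B u" using b c' by auto
    show ?thesis unfolding x y phi_def gad_gen_def using sy tt bc eq by fastforce
  qed
  have base: "phi b x \<in> gad_base B T u" if "x \<in> gad_base LCP T X" for x
    using that b unfolding gad_base_def phi_def by (auto simp: LCP_def PiE_iff)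
  from xy show ?thesis
  proof (elim UnE)
    assume "(x,y) \<in> gad_gen LCP T X" then show ?thesis using gen by blast
  next
    assume "(x,y) \<in> (gad_gen LCP T X)\<inverse>" then show ?thesis using gen by blast
  next
    assume "(x,y) \<in> Id_on (gad_base LCP T X)" then show ?thesis using base
      by (auto intro!: r_into_trancl)
  qed
qed

lemma phi_eq:
  assumes b: "b \<in> X \<rightarrow>\<^sub>E carr B u"
    and xy: "(x,y) \<in> gad_eq LCP T X"
  shows "gad_eq B T u `` {phi b x} = gad_eq B T u `` {phi b y}"
proof -
  have "(phi b x, phi b y) \<in> gad_eq B T u"
    unfolding gad_eq_def
    by (rule trancl_map_rel[OF xy[unfolded gad_eq_def]]) (rule phi_step[OF b])
  then show ?thesis unfolding gad_eq_def by (rule cls_eq)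
qed


definition Fm :: "('ty, 'r, 'e) mstruct \<Rightarrow> (nat set, lc_sym, 'b) mstruct \<Rightarrow> (nat set \<Rightarrow> 'a \<Rightarrow> (nat set \<times> 'b \<times> (nat \<Rightarrow> nat)) set)
   \<Rightarrow> 'ty \<Rightarrow> (nat set \<times> 'a \<times> (nat \<Rightarrow> 'e)) \<Rightarrow> (nat set \<times> 'b \<times> (nat \<Rightarrow> 'e)) set" where
  "Fm B T h u e = gad_eq B T u `` {phi (snd (snd e)) (SOME r. r \<in> h (fst e) (fst (snd e)))}"

lemma h_cls:
  assumes hom: "is_hom LC S (gadget LC LCP T) h" and X: "finite X" and s: "s \<in> carr S X"
  shows "\<exists>z \<in> gad_base LCP T X. h X s = gad_eq LCP T X `` {z} \<and> z \<in> h X s"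
proof -
  have "h X s \<in> gad_base LCP T X // gad_eq LCP T X"
    using hom X s unfolding is_hom_def by (auto simp: LC_def gadget_def)
  then obtain z where z: "z \<in> gad_base LCP T X" "h X s = gad_eq LCP T X `` {z}"
    by (auto elim: quotientE)
  moreover have "(z,z) \<in> gad_eq LCP T X" using z(1) unfolding gad_eq_def by (auto intro!: r_into_trancl)
  ultimately show ?thesis by blast
qed

lemma F_any:
  assumes hom: "is_hom LC S (gadget LC LCP T) h" and X: "finite X" and s: "s \<in> carr S X"
    and r: "r \<in> h X s" and b: "b \<in> X \<rightarrow>\<^sub>E carr B u"
  shows "Fm B T h u (X,s,b) = gad_eq B T u `` {phi b r}"
proof -
  obtain z where z: "z \<in> gad_base LCP T X" "h X s = gad_eq LCP T X `` {z}"
    using h_cls[OF hom X s] by blast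
  define r' where "r' = (SOME r. r \<in> h X s)"
  have r': "r' \<in> h X s" unfolding r'_def using r by (rule someI)
  have "gad_eq LCP T X `` {z} = gad_eq LCP T X `` {r'}"
    using r' z(2) unfolding gad_eq_def by (intro cls_eq) auto
  then have "(r', r) \<in> gad_eq LCP T X" using r z(2) by auto
  then have "gad_eq B T u `` {phi b r'} = gad_eq B T u `` {phi b r}" by (rule phi_eq[OF b])
  then show ?thesis unfolding Fm_def r'_def by simp
qed

lemma F_gen:
  assumes hom: "is_hom LC S (gadget LC LCP T) h"
    and e: "(e1, e2) \<in> gad_gen B S u" and strS: "is_structure LC S"
  shows "Fm B T h u e1 = Fm B T h u e2"
proof -
  from e obtain X X' p s s' b where
    e1: "e1 = (X, s, restrict (b \<circ> p) X)" and e2: "e2 = (X', s', b)"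
    and sy: "(X, X', p) \<in> Syms LC" and ss: "[s, s'] \<in> rels S (X, X', p)"
    and b: "b \<in> X' \<rightarrow>\<^sub>E carr B u"
    unfolding gad_gen_def by blast
  have fin: "finite X" "finite X'" and p: "p \<in> X \<rightarrow>\<^sub>E X'" using sy by (auto simp: LC_def)
  have sX: "s \<in> carr S X" and sX': "s' \<in> carr S X'"
  proof -
    have "\<forall>i<length [s,s']. [s,s'] ! i \<in> carr S ([X,X'] ! i)"
      using strS sy ss unfolding is_structure_def by (auto simp: LC_def)
    then have "[s,s'] ! 0 \<in> carr S ([X,X'] ! 0)" "[s,s'] ! 1 \<in> carr S ([X,X'] ! 1)"
      by (metis length_Cons list.size(3) One_nat_def lessI zero_less_Suc)+
    then show "s \<in> carr S X" "s' \<in> carr S X'" by simp_all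
  qed
  have "map (\<lambda>i. h (arity LC (X,X',p) ! i) ([s,s'] ! i)) [0..<length [s,s']] \<in> rels (gadget LC LCP T) (X,X',p)"
    using hom sy ss unfolding is_hom_def by blast
  then have "[h X s, h X' s'] \<in> rels (gadget LC LCP T) (X,X',p)"
    by (simp add: LC_def upt_rec)
  then obtain Z t bs where hh: "[h X s, h X' s'] = map (\<lambda>i. gad_eq LCP T ([X,X'] ! i) `` {(Z, t, bs ! i)}) [0..<length bs]"
    and Z: "finite Z" "t \<in> carr T Z" and bs: "bs \<in> rels (power LC LCP Z) (X,X',p)"
  proof -
    have ar: "arity LC (X,X',p) = [X,X']" by (simp add: LC_def)
    have "\<exists>Z t bs. [h X s, h X' s'] = map (\<lambda>i. gad_eq LCP T ([X,X'] ! i) `` {(Z, t, bs ! i)}) [0..<length bs]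
       \<and> finite Z \<and> t \<in> carr T Z \<and> bs \<in> rels (power LC LCP Z) (X,X',p)"
      using \<open>[h X s, h X' s'] \<in> rels (gadget LC LCP T) (X,X',p)\<close> unfolding gadget_def using ar by simp
    then show ?thesis using that by (elim exE conjE) assumption
  qed
  have lbs: "length bs = 2" and all: "\<forall>i<2. bs ! i \<in> Z \<rightarrow>\<^sub>E [X,X'] ! i"
    and rel: "\<forall>z\<in>Z. map (\<lambda>b. b z) bs \<in> {[x, p x] | x. x \<in> X}"
    using bs by (auto simp: power_def LC_def LCP_def)
  have bs0: "bs ! 0 \<in> Z \<rightarrow>\<^sub>E X" using all[rule_format, of 0] by simp
  have bs1: "bs ! 1 \<in> Z \<rightarrow>\<^sub>E X'" using all[rule_format, of 1] by simp
  have rel': "(bs ! 1) z = p ((bs ! 0) z)" if zZ: "z \<in> Z" for z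
  proof -
    obtain x where "map (\<lambda>b. b z) bs = [x, p x]" using rel zZ by force
    then have "map (\<lambda>b. b z) bs ! 0 = x" "map (\<lambda>b. b z) bs ! 1 = p x" by simp_all
    then show ?thesis using lbs by simp
  qed
  have hs: "h X s = gad_eq LCP T X `` {(Z, t, bs ! 0)}" and hs': "h X' s' = gad_eq LCP T X' `` {(Z, t, bs ! 1)}"
    using hh lbs by (simp_all add: upt_rec)
  have in0: "(Z, t, bs ! 0) \<in> h X s" unfolding hs gad_eq_def
    using Z bs0 by (auto intro!: r_into_trancl simp: gad_base_def LCP_def)
  have in1: "(Z, t, bs ! 1) \<in> h X' s'" unfolding hs' gad_eq_def
    using Z bs1 by (auto intro!: r_into_trancl simp: gad_base_def LCP_def)
  have bp: "restrict (b \<circ> p) X \<in> X \<rightarrow>\<^sub>E carr B u" using b p by auto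
  have "Fm B T h u e1 = gad_eq B T u `` {phi (restrict (b \<circ> p) X) (Z, t, bs ! 0)}"
    unfolding e1 by (rule F_any[OF hom fin(1) sX in0 bp])
  also have "phi (restrict (b \<circ> p) X) (Z, t, bs ! 0) = phi b (Z, t, bs ! 1)"
    unfolding phi_def using bs0 rel' by (auto simp: fun_eq_iff)
  also have "gad_eq B T u `` {phi b (Z, t, bs ! 1)} = Fm B T h u e2"
    unfolding e2 by (rule F_any[OF hom fin(2) sX' in1 b, symmetric])
  finally show ?thesis .
qed

lemma F_resp:
  assumes hom: "is_hom LC S (gadget LC LCP T) h"
    and e: "(e1, e2) \<in> gad_eq B S u" and strS: "is_structure LC S"
  shows "Fm B T h u e1 = Fm B T h u e2"
  using e unfolding gad_eq_def
  by (rule trancl_resp) (auto dest: F_gen[OF hom _ strS])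


theorem mainTheorem17:
  fixes S :: "(nat set, lc_sym, 'a) mstruct"
    and T :: "(nat set, lc_sym, 'b) mstruct"
    and sg :: "('ty, 'r) msig"
    and B :: "('ty, 'r, 'e) mstruct"
  assumes "lc_instance S"
    and "lc_instance T"
    and "hom_exists LC S (gadget LC LCP T)"
    and "is_structure sg B"
  shows "hom_exists sg (gadget sg B S) (gadget sg B T)"
proof -
  obtain h where hom: "is_hom LC S (gadget LC LCP T) h"
    using assms(3) unfolding hom_exists_def by blast
  have strS: "is_structure LC S" using assms(1) unfolding lc_instance_def by blast
  define g where "g u C = Fm B T h u (SOME e. e \<in> C)" for u C
  have g_cls: "g u (gad_eq B S u `` {e}) = Fm B T h u e" if e: "e \<in> gad_base B S u" for u e
  proof -
    have "(e,e) \<in> gad_eq B S u" using e unfolding gad_eq_def by (auto intro!: r_into_trancl)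
    then have "e \<in> gad_eq B S u `` {e}" by simp
    then have "(SOME e'. e' \<in> gad_eq B S u `` {e}) \<in> gad_eq B S u `` {e}" by (rule someI[of "\<lambda>e'. e' \<in> gad_eq B S u `` {e}" e])
    then have "(e, SOME e'. e' \<in> gad_eq B S u `` {e}) \<in> gad_eq B S u" by simp
    then show ?thesis unfolding g_def by (rule F_resp[OF hom _ strS, symmetric])
  qed
  have F_val: "\<exists>Y t c. finite Y \<and> t \<in> carr T Y \<and> c \<in> Y \<rightarrow>\<^sub>E X \<and>
      (\<forall>u b. b \<in> X \<rightarrow>\<^sub>E carr B u \<longrightarrow> Fm B T h u (X,s,b) = gad_eq B T u `` {(Y, t, restrict (b \<circ> c) Y)})"
    if X: "finite X" and s: "s \<in> carr S X" for X s
  proof -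
    obtain z where z: "z \<in> gad_base LCP T X" "z \<in> h X s" using h_cls[OF hom X s] by blast
    obtain Y t c where zz: "z = (Y,t,c)" by (cases z)
    have Y: "finite Y" "t \<in> carr T Y" "c \<in> Y \<rightarrow>\<^sub>E X" using z(1) zz by (auto simp: gad_base_def LCP_def)
    show ?thesis
    proof (intro exI conjI allI impI)
      fix u b assume b: "b \<in> X \<rightarrow>\<^sub>E carr B u"
      show "Fm B T h u (X,s,b) = gad_eq B T u `` {(Y, t, restrict (b \<circ> c) Y)}"
        using F_any[OF hom X s z(2) b] unfolding zz phi_def by simp
    qed (rule Y)+
  qed
  have "is_hom sg (gadget sg B S) (gadget sg B T) g"
    unfolding is_hom_def
  proof (intro conjI ballI)
    fix u C assume "C \<in> carr (gadget sg B S) u"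
    then have "C \<in> gad_base B S u // gad_eq B S u" by (simp add: gadget_def)
    then obtain e where e: "e \<in> gad_base B S u" and C: "C = gad_eq B S u `` {e}"
      by (rule quotientE)
    obtain X s b where eq: "e = (X,s,b)" by (cases e)
    have X: "finite X" "s \<in> carr S X" "b \<in> X \<rightarrow>\<^sub>E carr B u" using e eq by (auto simp: gad_base_def)
    obtain Y t c where Y: "finite Y" "t \<in> carr T Y" "c \<in> Y \<rightarrow>\<^sub>E X"
      and Fall: "\<forall>u b. b \<in> X \<rightarrow>\<^sub>E carr B u \<longrightarrow> Fm B T h u (X,s,b) = gad_eq B T u `` {(Y, t, restrict (b \<circ> c) Y)}"
      using F_val[OF X(1,2)] by (elim exE conjE) (rule that)
    have F: "Fm B T h u (X,s,b) = gad_eq B T u `` {(Y, t, restrict (b \<circ> c) Y)}"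
      using Fall X(3) by blast
    have "(Y, t, restrict (b \<circ> c) Y) \<in> gad_base B T u"
      using Y X(3) by (auto simp: gad_base_def PiE_iff)
    then have "gad_eq B T u `` {(Y, t, restrict (b \<circ> c) Y)} \<in> gad_base B T u // gad_eq B T u"
      by (rule quotientI)
    then show "g u C \<in> carr (gadget sg B T) u"
      using g_cls[OF e] F unfolding C eq by (simp add: gadget_def)
  next
    fix R xs assume "xs \<in> rels (gadget sg B S) R"
    then obtain X s bs where xs: "xs = map (\<lambda>i. gad_eq B S (arity sg R ! i) `` {(X, s, bs ! i)}) [0..<length bs]"
      and X: "finite X" "s \<in> carr S X" and bs: "bs \<in> rels (power sg B X) R"
      by (auto simp: gadget_def)
    obtain Y t c where Y: "finite Y" "t \<in> carr T Y" "c \<in> Y \<rightarrow>\<^sub>E X"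
      and Fall: "\<forall>u b. b \<in> X \<rightarrow>\<^sub>E carr B u \<longrightarrow> Fm B T h u (X,s,b) = gad_eq B T u `` {(Y, t, restrict (b \<circ> c) Y)}"
      using F_val[OF X] by (elim exE conjE) (rule that)
    note F = Fall[rule_format]
    have bsi: "bs ! i \<in> X \<rightarrow>\<^sub>E carr B (arity sg R ! i)" if "i < length bs" for i
      using bs that by (auto simp: power_def)
    define bs' where "bs' = map (\<lambda>b. restrict (b \<circ> c) Y) bs"
    have eqs: "map (\<lambda>i. g (arity sg R ! i) (xs ! i)) [0..<length xs]
        = map (\<lambda>i. gad_eq B T (arity sg R ! i) `` {(Y, t, bs' ! i)}) [0..<length bs']"
    proof (rule nth_equalityI)
      show "length (map (\<lambda>i. g (arity sg R ! i) (xs ! i)) [0..<length xs]) =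
          length (map (\<lambda>i. gad_eq B T (arity sg R ! i) `` {(Y, t, bs' ! i)}) [0..<length bs'])"
        by (simp add: xs bs'_def)
    next
      fix i assume "i < length (map (\<lambda>i. g (arity sg R ! i) (xs ! i)) [0..<length xs])"
      then have i: "i < length bs" by (simp add: xs)
      have base: "(X, s, bs ! i) \<in> gad_base B S (arity sg R ! i)"
        using X bsi[OF i] by (auto simp: gad_base_def)
      show "map (\<lambda>i. g (arity sg R ! i) (xs ! i)) [0..<length xs] ! i =
          map (\<lambda>i. gad_eq B T (arity sg R ! i) `` {(Y, t, bs' ! i)}) [0..<length bs'] ! i"
        using i g_cls[OF base] F[OF bsi[OF i]] by (simp add: xs bs'_def)
    qed
    have bs': "bs' \<in> rels (power sg B Y) R"
    proof -
      have "length bs' = length (arity sg R)" using bs by (simp add: bs'_def power_def)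
      moreover have "\<forall>i<length bs'. bs' ! i \<in> Y \<rightarrow>\<^sub>E carr B (arity sg R ! i)"
        using bsi Y(3) by (auto simp: bs'_def PiE_iff)
      moreover have "\<forall>y\<in>Y. map (\<lambda>b. b y) bs' \<in> rels B R"
      proof
        fix y assume y: "y \<in> Y"
        then have "c y \<in> X" using Y(3) by auto
        then have "map (\<lambda>b. b (c y)) bs \<in> rels B R" using bs by (auto simp: power_def)
        moreover have "map (\<lambda>b. b y) bs' = map (\<lambda>b. b (c y)) bs" using y by (simp add: bs'_def)
        ultimately show "map (\<lambda>b. b y) bs' \<in> rels B R" by simp
      qed
      ultimately show ?thesis by (simp add: power_def)
    qed
    show "map (\<lambda>i. g (arity sg R ! i) (xs ! i)) [0..<length xs] \<in> rels (gadget sg B T) R"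
      unfolding eqs using Y bs' by (auto simp: gadget_def)
  qed
  then show ?thesis unfolding hom_exists_def by blast
qed

end
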